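(* Let $\tilde U(\mathbf v,d)=V(\mathbf v,d)\setminus\{[1,0,0],[0,1,0],[0,0,1]\}$. Then the closure of $\beta(\tilde U(\mathbf v,d))$ is contained in $HC_F(\mathbf v,d)$, and $\beta$ restricts to a rational map $\beta:V(\mathbf v,d)\dashrightarrow HC_F(\mathbf v,d)$.
   Context: On $\mathbb{C}P^4$ use homogeneous coordinates $[w_0,w_1,w_2,w_3,x_1]$; let $Y$ be the surface $w_0w_3-w_1w_2=0$, $x_1^2+w_0w_3=0$. For parameters $[\mathbf v,d]=[v_{11},v_{12},v_{21},v_{22},d]\in\mathbb{C}P^4$ (complex, not all zero) set $a_1=v_{11}-v_{21}-d$, $a_2=-v_{11}-v_{21}+d$, $a_3=v_{11}+v_{21}+d$, $a_4=-v_{11}+v_{21}-d$, and let $HC_F(\mathbf v,d)$ be the set of points of $Y$ satisfying $2\big(v_{22}(w_3-w_0)-v_{12}(w_2-w_1)\big)x_1+a_1w_0w_1+a_2w_0w_2+a_3w_1w_3+a_4w_2w_3=0$. On $\mathbb{C}P^2$ with coordinates $[u_0,u_1,u_2]$ let $V(\mathbf v,d)$ be the curve $P=0$ with $P=a_4u_2^4+2(v_{22}u_0-v_{12}u_1)u_2^3-(a_3u_0^2+a_2u_1^2)u_2^2+2u_0u_1(v_{22}u_1-v_{12}u_0)u_2+a_1u_0^2u_1^2$. Define the rational map $\beta:\mathbb{C}P^2\dashrightarrow Y$, $\beta([u_0,u_1,u_2])=[-u_0u_1^2,-u_0^2u_1,u_1u_2^2,u_0u_2^2,u_0u_1u_2]$,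 which is defined away from $[1,0,0],[0,1,0],[0,0,1]$. *)

theory Defs
  imports "HOL-Analysis.Analysis"
begin

text \<open>Projective sets are represented by their affine cones (sets of nonzero homogeneous
coordinate vectors, invariant under nonzero complex scaling). Points of CP^4 are given by
vectors in C^5 (coordinates (w0,w1,w2,w3,x1)), points of CP^2 by vectors in C^3 (u0,u1,u2).\<close>

type_synonym c5 = "complex \<times> complex \<times> complex \<times> complex \<times> complex"
type_synonym c3 = "complex \<times> complex \<times> complex"

text \<open>Closure in projective space (classical topology), expressed on cones: for a
scaling-invariant set S of nonzero vectors, the cone over the closure of the projectivisation
of S is closure S minus the origin (the projection C^(n+1)-{0} to CP^n is an open quotient map).\<close>
definition pcl :: "'a::real_normed_vector set \<Rightarrow> 'a set" where
  "pcl S = closure S - {0}"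

definition Ycone :: "c5 set" where
  "Ycone = {(w0,w1,w2,w3,x1). (w0,w1,w2,w3,x1) \<noteq> 0 \<and>
              w0*w3 - w1*w2 = 0 \<and> x1^2 + w0*w3 = 0}"

definition a1 :: "complex \<Rightarrow> complex \<Rightarrow> complex \<Rightarrow> complex" where
  "a1 v11 v21 d = v11 - v21 - d"
definition a2 :: "complex \<Rightarrow> complex \<Rightarrow> complex \<Rightarrow> complex" where
  "a2 v11 v21 d = - v11 - v21 + d"
definition a3 :: "complex \<Rightarrow> complex \<Rightarrow> complex \<Rightarrow> complex" where
  "a3 v11 v21 d = v11 + v21 + d"
definition a4 :: "complex \<Rightarrow> complex \<Rightarrow> complex \<Rightarrow> complex" where
  "a4 v11 v21 d = - v11 + v21 - d"

definition HCF :: "complex \<Rightarrow> complex \<Rightarrow> complex \<Rightarrow> complex \<Rightarrow> complex \<Rightarrow> c5 set" where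
  "HCF v11 v12 v21 v22 d = {(w0,w1,w2,w3,x1). (w0,w1,w2,w3,x1) \<in> Ycone \<and>
      2 * (v22*(w3 - w0) - v12*(w2 - w1)) * x1 + a1 v11 v21 d * w0 * w1
      + a2 v11 v21 d * w0 * w2 + a3 v11 v21 d * w1 * w3 + a4 v11 v21 d * w2 * w3 = 0}"

definition Ppoly :: "complex \<Rightarrow> complex \<Rightarrow> complex \<Rightarrow> complex \<Rightarrow> complex \<Rightarrow> c3 \<Rightarrow> complex" where
  "Ppoly v11 v12 v21 v22 d = (\<lambda>(u0,u1,u2).
      a4 v11 v21 d * u2^4 + 2 * (v22*u0 - v12*u1) * u2^3
      - (a3 v11 v21 d * u0^2 + a2 v11 v21 d * u1^2) * u2^2
      + 2 * u0 * u1 * (v22*u1 - v12*u0) * u2 + a1 v11 v21 d * u0^2 * u1^2)"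

definition Vcone :: "complex \<Rightarrow> complex \<Rightarrow> complex \<Rightarrow> complex \<Rightarrow> complex \<Rightarrow> c3 set" where
  "Vcone v11 v12 v21 v22 d = {u. u \<noteq> 0 \<and> Ppoly v11 v12 v21 v22 d u = 0}"

definition coord_pts :: "c3 set" where
  "coord_pts = {u. \<exists>t. t \<noteq> 0 \<and> (u = (t,0,0) \<or> u = (0,t,0) \<or> u = (0,0,t))}"

definition Ucone :: "complex \<Rightarrow> complex \<Rightarrow> complex \<Rightarrow> complex \<Rightarrow> complex \<Rightarrow> c3 set" where
  "Ucone v11 v12 v21 v22 d = Vcone v11 v12 v21 v22 d - coord_pts"

definition beta :: "c3 \<Rightarrow> c5" where
  "beta = (\<lambda>(u0,u1,u2). (- (u0*u1^2), - (u0^2*u1), u1*u2^2, u0*u2^2, u0*u1*u2))"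

end

theory Submission imports Defs begin

lemma quad_pt2:
  fixes c2 c1 c0 w :: complex
  assumes "c2 \<noteq> 0" "w^2 = c1^2 - 4*c2*c0"
  shows "c2 * ((- c1 + w) / (2*c2))^2 + c1 * ((- c1 + w) / (2*c2)) + c0 = 0"
proof -
  have "4*c2 * (c2 * ((- c1 + w) / (2*c2))^2 + c1 * ((- c1 + w) / (2*c2)) + c0)
     = (w - c1)^2 + 2*c1*(w-c1) + 4*c2*c0"
    using assms(1) by (simp add: field_simps power2_eq_square)
  also have "\<dots> = 0" using assms(2) by (simp add: algebra_simps power2_eq_square)
  finally show ?thesis using assms(1) by simp
qed

lemma quad_lim2:
  fixes c2 c1 c0 :: "complex \<Rightarrow> complex"
  assumes "(c2 \<longlongrightarrow> A) F" "A \<noteq> 0" "(c1 \<longlongrightarrow> 0) F" "(c0 \<longlongrightarrow> 0) F"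
  shows "\<exists>x. (x \<longlongrightarrow> 0) F \<and> eventually (\<lambda>s. c2 s * (x s)^2 + c1 s * x s + c0 s = 0) F"
proof -
  define w where "w s = csqrt (c1 s ^2 - 4 * c2 s * c0 s)" for s
  have D: "((\<lambda>s. c1 s ^2 - 4 * c2 s * c0 s) \<longlongrightarrow> 0) F"
    using assms by (auto intro!: tendsto_eq_intros)
  have "((\<lambda>s. sqrt (norm (c1 s ^2 - 4 * c2 s * c0 s))) \<longlongrightarrow> sqrt (norm (0::complex))) F"
    by (intro tendsto_intros D)
  hence "((\<lambda>s. norm (w s)) \<longlongrightarrow> 0) F" by (simp add: w_def)
  hence W: "(w \<longlongrightarrow> 0) F" by (simp add: tendsto_norm_zero_iff)
  have "((\<lambda>s. (- c1 s + w s) / (2 * c2 s)) \<longlongrightarrow> (- 0 + 0) / (2 * A)) F"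
    using assms W by (intro tendsto_intros) auto
  moreover have "eventually (\<lambda>s. c2 s \<noteq> 0) F"
    using assms(1,2) tendsto_imp_eventually_ne by blast
  hence "eventually (\<lambda>s. c2 s * ((- c1 s + w s) / (2 * c2 s))^2 + c1 s * ((- c1 s + w s) / (2 * c2 s)) + c0 s = 0) F"
    by (rule eventually_mono) (rule quad_pt2, auto simp: w_def)
  ultimately show ?thesis by (intro exI[of _ "\<lambda>s. (- c1 s + w s) / (2 * c2 s)"]) simp
qed

lemma quad_pt1:
  fixes c2 c1 c0 :: complex
  assumes "c1 \<noteq> 0"
  shows "\<exists>y. c2 * y^2 + c1 * y + c0 = 0 \<and> norm y \<le> 2 * norm c0 / norm c1"
proof -
  obtain w where w2: "w^2 = c1^2 - 4*c2*c0" and wre: "Re w * Re c1 + Im w * Im c1 \<ge> 0"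
  proof (cases "Re (csqrt (c1^2 - 4*c2*c0)) * Re c1 + Im (csqrt (c1^2 - 4*c2*c0)) * Im c1 \<ge> 0")
    case True then show ?thesis using that[of "csqrt (c1^2 - 4*c2*c0)"] by simp
  next
    case False then show ?thesis using that[of "- csqrt (c1^2 - 4*c2*c0)"] by simp
  qed
  have eq: "(cmod (c1+w))^2 = (cmod c1)^2 + ((Re w)^2 + (Im w)^2) + 2*(Re w * Re c1 + Im w * Im c1)"
    by (simp only: cmod_power2) (simp add: power2_eq_square algebra_simps)
  have "(cmod c1)^2 \<le> (cmod (c1 + w))^2"
    unfolding eq using wre zero_le_power2[of "Re w"] zero_le_power2[of "Im w"] by (smt (verit))
  hence le: "cmod c1 \<le> cmod (c1 + w)" by (rule power2_le_imp_le) simp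
  have nz: "c1 + w \<noteq> 0" using le assms by auto
  define y where "y = - 2 * c0 / (c1 + w)"
  have yq: "y * (c1 + w) = - 2 * c0" using nz unfolding y_def by simp
  have "(c1 + w)^2 * (c2 * y^2 + c1 * y + c0) = c2 * (y * (c1+w))^2 + c1 * (y*(c1+w)) * (c1+w) + c0 * (c1+w)^2"
    by (simp add: algebra_simps power2_eq_square)
  also have "\<dots> = c0 * (4*c2*c0 - c1^2 + w^2)"
    unfolding yq by (simp add: algebra_simps power2_eq_square)
  also have "\<dots> = 0" using w2 by simp
  finally have root: "c2 * y^2 + c1 * y + c0 = 0" using nz by simp
  have "norm y = 2 * norm c0 / norm (c1 + w)" unfolding y_def by (simp add: norm_divide norm_mult)
  also have "\<dots> \<le> 2 * norm c0 / norm c1"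
    using le assms nz by (intro divide_left_mono) auto
  finally show ?thesis using root by blast
qed

lemma quad_lim1:
  fixes c2 c1 c0 :: "complex \<Rightarrow> complex"
  assumes "(c1 \<longlongrightarrow> B) F" "B \<noteq> 0" "(c0 \<longlongrightarrow> 0) F"
  shows "\<exists>x. (x \<longlongrightarrow> 0) F \<and> eventually (\<lambda>s. c2 s * (x s)^2 + c1 s * x s + c0 s = 0) F"
proof -
  have "\<forall>s. \<exists>y. c1 s \<noteq> 0 \<longrightarrow> c2 s * y^2 + c1 s * y + c0 s = 0 \<and> norm y \<le> 2 * norm (c0 s) / norm (c1 s)"
    using quad_pt1 by blast
  then obtain x where x: "\<And>s. c1 s \<noteq> 0 \<Longrightarrow> c2 s * (x s)^2 + c1 s * x s + c0 s = 0 \<and> norm (x s) \<le> 2 * norm (c0 s) / norm (c1 s)"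
    by metis
  have ev: "eventually (\<lambda>s. c1 s \<noteq> 0) F"
    using assms(1,2) tendsto_imp_eventually_ne by blast
  have "((\<lambda>s. 2 * norm (c0 s) / norm (c1 s)) \<longlongrightarrow> 2 * norm (0::complex) / norm B) F"
    using assms by (intro tendsto_intros) auto
  hence L: "((\<lambda>s. 2 * norm (c0 s) / norm (c1 s)) \<longlongrightarrow> 0) F" by simp
  have E: "eventually (\<lambda>s. norm (x s) \<le> 2 * norm (c0 s) / norm (c1 s)) F"
    using ev by (rule eventually_mono) (use x in blast)
    have "(x \<longlongrightarrow> 0) F" by (rule Lim_null_comparison[OF E L])
  moreover have "eventually (\<lambda>s. c2 s * (x s)^2 + c1 s * x s + c0 s = 0) F"
    using ev by (rule eventually_mono) (use x in blast)
  ultimately show ?thesis by blast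
qed

lemma in_closure_at0:
  fixes g :: "complex \<Rightarrow> 'a::real_normed_vector"
  assumes "(g \<longlongrightarrow> u) (at 0)" "eventually (\<lambda>s. g s \<in> S) (at 0)"
  shows "u \<in> closure S"
proof (rule Lim_in_closed_set[OF closed_closure _ _ assms(1)])
  show "eventually (\<lambda>s. g s \<in> closure S) (at 0)"
    using assms(2) by (rule eventually_mono) (meson closure_subset subsetD)
  show "at (0::complex) \<noteq> bot" by simp
qed

lemma ev_ne0: "eventually (\<lambda>s::complex. s \<noteq> 0) (at 0)"
  by (simp add: eventually_at_filter)


lemma nc12: "a \<noteq> 0 \<Longrightarrow> b \<noteq> 0 \<Longrightarrow> (a,b,c) \<notin> coord_pts"
  by (auto simp: coord_pts_def)
lemma nc13: "a \<noteq> 0 \<Longrightarrow> c \<noteq> 0 \<Longrightarrow> (a,b,c) \<notin> coord_pts"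
  by (auto simp: coord_pts_def)
lemma nc23: "b \<noteq> 0 \<Longrightarrow> c \<noteq> 0 \<Longrightarrow> (a,b,c) \<notin> coord_pts"
  by (auto simp: coord_pts_def)

lemma closure_by_curve:
  fixes g :: "complex \<Rightarrow> c3"
  assumes "(g \<longlongrightarrow> u) (at 0)"
    "eventually (\<lambda>s. Ppoly v11 v12 v21 v22 d (g s) = 0 \<and> g s \<noteq> 0 \<and> g s \<notin> coord_pts) (at 0)"
  shows "u \<in> closure (Ucone v11 v12 v21 v22 d)"
  using assms(1) by (rule in_closure_at0)
    (use assms(2) in \<open>rule eventually_mono, simp add: Ucone_def Vcone_def\<close>)

lemma near_e1:
  assumes t: "t \<noteq> 0"
  shows "(t,0,0) \<in> closure (Ucone v11 v12 v21 v22 d)"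
proof (cases "a1 v11 v21 d = 0")
  case True
  show ?thesis
  proof (rule closure_by_curve[where g = "\<lambda>s::complex. (t, t * s, 0::complex)"])
    show "((\<lambda>s. (t, t * s, 0)) \<longlongrightarrow> (t,0,0)) (at 0)"
      by (auto intro!: tendsto_eq_intros)
    show "eventually (\<lambda>s. Ppoly v11 v12 v21 v22 d (t, t * s, 0) = 0 \<and> (t, t * s, 0) \<noteq> 0 \<and> (t, t * s, 0) \<notin> coord_pts) (at 0)"
      using ev_ne0 by (rule eventually_mono) (use t True in \<open>auto simp: Ppoly_def nc12 zero_prod_def\<close>)
  qed
next
  case False
  define c2 where "c2 s = a1 v11 v21 d + 2 * v22 * s - a2 v11 v21 d * s^2" for s :: complex
  define c1 where "c1 s = - 2 * v12 * s * (1+s^2)" for s :: complex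
  define c0 where "c0 s = a4 v11 v21 d * s^4 + 2 * v22 * s^3 - a3 v11 v21 d * s^2" for s :: complex
  have "\<exists>x. (x \<longlongrightarrow> 0) (at 0) \<and> eventually (\<lambda>s. c2 s * (x s)^2 + c1 s * x s + c0 s = 0) (at 0)"
    by (rule quad_lim2[where A = "a1 v11 v21 d"]) (use False in \<open>auto simp: c2_def c1_def c0_def intro!: tendsto_eq_intros\<close>)
  then obtain x where x0: "(x \<longlongrightarrow> 0) (at 0)" and ev: "eventually (\<lambda>s. c2 s * (x s)^2 + c1 s * x s + c0 s = 0) (at 0)"
    by blast
  have P: "Ppoly v11 v12 v21 v22 d (t, t * y, t * s) = t^4 * (c2 s * y^2 + c1 s * y + c0 s)" for y s
    unfolding Ppoly_def c2_def c1_def c0_def by (simp add: algebra_simps eval_nat_numeral)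
  show ?thesis
  proof (rule closure_by_curve[where g = "\<lambda>s. (t, t * x s, t * s)"])
    show "((\<lambda>s. (t, t * x s, t * s)) \<longlongrightarrow> (t,0,0)) (at 0)"
      using x0 by (auto intro!: tendsto_eq_intros)
    show "eventually (\<lambda>s. Ppoly v11 v12 v21 v22 d (t, t * x s, t * s) = 0 \<and> (t, t * x s, t * s) \<noteq> 0 \<and> (t, t * x s, t * s) \<notin> coord_pts) (at 0)"
      using eventually_conj[OF ev ev_ne0] by (rule eventually_mono) (use t in \<open>auto simp: P nc13 zero_prod_def\<close>)
  qed
qed


lemma near_e2:
  assumes t: "t \<noteq> 0"
  shows "(0,t,0) \<in> closure (Ucone v11 v12 v21 v22 d)"
proof (cases "a1 v11 v21 d = 0")
  case True
  show ?thesis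
  proof (rule closure_by_curve[where g = "\<lambda>s::complex. (t * s, t, 0::complex)"])
    show "((\<lambda>s. (t * s, t, 0)) \<longlongrightarrow> (0,t,0)) (at 0)"
      by (auto intro!: tendsto_eq_intros)
    show "eventually (\<lambda>s. Ppoly v11 v12 v21 v22 d (t * s, t, 0) = 0 \<and> (t * s, t, 0) \<noteq> 0 \<and> (t * s, t, 0) \<notin> coord_pts) (at 0)"
      using ev_ne0 by (rule eventually_mono) (use t True in \<open>auto simp: Ppoly_def nc12 zero_prod_def\<close>)
  qed
next
  case False
  define c2 where "c2 s = a1 v11 v21 d - 2 * v12 * s - a3 v11 v21 d * s^2" for s :: complex
  define c1 where "c1 s = 2 * v22 * s * (1+s^2)" for s :: complex
  define c0 where "c0 s = a4 v11 v21 d * s^4 - 2 * v12 * s^3 - a2 v11 v21 d * s^2" for s :: complex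
  have "\<exists>x. (x \<longlongrightarrow> 0) (at 0) \<and> eventually (\<lambda>s. c2 s * (x s)^2 + c1 s * x s + c0 s = 0) (at 0)"
    by (rule quad_lim2[where A = "a1 v11 v21 d"]) (use False in \<open>auto simp: c2_def c1_def c0_def intro!: tendsto_eq_intros\<close>)
  then obtain x where x0: "(x \<longlongrightarrow> 0) (at 0)" and ev: "eventually (\<lambda>s. c2 s * (x s)^2 + c1 s * x s + c0 s = 0) (at 0)"
    by blast
  have P: "Ppoly v11 v12 v21 v22 d (t * y, t, t * s) = t^4 * (c2 s * y^2 + c1 s * y + c0 s)" for y s
    unfolding Ppoly_def c2_def c1_def c0_def by (simp add: algebra_simps eval_nat_numeral)
  show ?thesis
  proof (rule closure_by_curve[where g = "\<lambda>s. (t * x s, t, t * s)"])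
    show "((\<lambda>s. (t * x s, t, t * s)) \<longlongrightarrow> (0,t,0)) (at 0)"
      using x0 by (auto intro!: tendsto_eq_intros)
    show "eventually (\<lambda>s. Ppoly v11 v12 v21 v22 d (t * x s, t, t * s) = 0 \<and> (t * x s, t, t * s) \<noteq> 0 \<and> (t * x s, t, t * s) \<notin> coord_pts) (at 0)"
      using eventually_conj[OF ev ev_ne0] by (rule eventually_mono) (use t in \<open>auto simp: P nc23 zero_prod_def\<close>)
  qed
qed

lemma near_e3:
  assumes t: "t \<noteq> 0" and a4: "a4 v11 v21 d = 0"
  shows "(0,0,t) \<in> closure (Ucone v11 v12 v21 v22 d)"
proof -
  define c2 where "c2 s = - a2 v11 v21 d + 2 * v22 * s + a1 v11 v21 d * s^2" for s :: complex
  define c1 where "c1 s = - 2 * v12 * (1+s^2)" for s :: complex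
  define c0 where "c0 s = a4 v11 v21 d + 2 * v22 * s - a3 v11 v21 d * s^2" for s :: complex
  define e2 where "e2 s = - a3 v11 v21 d - 2 * v12 * s + a1 v11 v21 d * s^2" for s :: complex
  define e1 where "e1 s = 2 * v22 * (1+s^2)" for s :: complex
  define e0 where "e0 s = a4 v11 v21 d - 2 * v12 * s - a2 v11 v21 d * s^2" for s :: complex
  have P1: "Ppoly v11 v12 v21 v22 d (t * s, t * y, t) = t^4 * (c2 s * y^2 + c1 s * y + c0 s)" for y s
    unfolding Ppoly_def c2_def c1_def c0_def by (simp add: algebra_simps eval_nat_numeral)
  have P2: "Ppoly v11 v12 v21 v22 d (t * y, t * s, t) = t^4 * (e2 s * y^2 + e1 s * y + e0 s)" for y s
    unfolding Ppoly_def e2_def e1_def e0_def by (simp add: algebra_simps eval_nat_numeral)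
  show ?thesis
  proof (cases "v12 = 0")
    case False
    have "\<exists>x. (x \<longlongrightarrow> 0) (at 0) \<and> eventually (\<lambda>s. c2 s * (x s)^2 + c1 s * x s + c0 s = 0) (at 0)"
      by (rule quad_lim1[where B = "- 2 * v12"]) (use False a4 in \<open>auto simp: c1_def c0_def intro!: tendsto_eq_intros\<close>)
    then obtain x where x0: "(x \<longlongrightarrow> 0) (at 0)" and ev: "eventually (\<lambda>s. c2 s * (x s)^2 + c1 s * x s + c0 s = 0) (at 0)"
      by blast
    show ?thesis
    proof (rule closure_by_curve[where g = "\<lambda>s. (t * s, t * x s, t)"])
      show "((\<lambda>s. (t * s, t * x s, t)) \<longlongrightarrow> (0,0,t)) (at 0)"
        using x0 by (auto intro!: tendsto_eq_intros)
      show "eventually (\<lambda>s. Ppoly v11 v12 v21 v22 d (t * s, t * x s, t) = 0 \<and> (t * s, t * x s, t) \<noteq> 0 \<and> (t * s, t * x s, t) \<notin> coord_pts) (at 0)"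
        using eventually_conj[OF ev ev_ne0] by (rule eventually_mono) (use t in \<open>auto simp: P1 nc13 zero_prod_def\<close>)
    qed
  next
    case v12: True
    show ?thesis
    proof (cases "v22 = 0 \<and> a3 v11 v21 d = 0")
      case True
      show ?thesis
      proof (rule closure_by_curve[where g = "\<lambda>s::complex. (t * s, 0::complex, t)"])
        show "((\<lambda>s. (t * s, 0, t)) \<longlongrightarrow> (0,0,t)) (at 0)"
          by (auto intro!: tendsto_eq_intros)
        show "eventually (\<lambda>s. Ppoly v11 v12 v21 v22 d (t * s, 0, t) = 0 \<and> (t * s, 0, t) \<noteq> 0 \<and> (t * s, 0, t) \<notin> coord_pts) (at 0)"
          using ev_ne0 by (rule eventually_mono) (use t True a4 in \<open>auto simp: Ppoly_def nc13 zero_prod_def\<close>)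
      qed
    next
      case False
      have "\<exists>x. (x \<longlongrightarrow> 0) (at 0) \<and> eventually (\<lambda>s. e2 s * (x s)^2 + e1 s * x s + e0 s = 0) (at 0)"
      proof (cases "v22 = 0")
        case False
        show ?thesis
          by (rule quad_lim1[where B = "2 * v22"]) (use False a4 v12 in \<open>auto simp: e1_def e0_def intro!: tendsto_eq_intros\<close>)
      next
        case True
        with \<open>\<not> (v22 = 0 \<and> a3 v11 v21 d = 0)\<close> have "a3 v11 v21 d \<noteq> 0" by simp
        then show ?thesis
          by (intro quad_lim2[where A = "- a3 v11 v21 d"]) (use True a4 v12 in \<open>auto simp: e2_def e1_def e0_def intro!: tendsto_eq_intros\<close>)
      qed
      then obtain x where x0: "(x \<longlongrightarrow> 0) (at 0)" and ev: "eventually (\<lambda>s. e2 s * (x s)^2 + e1 s * x s + e0 s = 0) (at 0)"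
        by blast
      show ?thesis
      proof (rule closure_by_curve[where g = "\<lambda>s. (t * x s, t * s, t)"])
        show "((\<lambda>s. (t * x s, t * s, t)) \<longlongrightarrow> (0,0,t)) (at 0)"
          using x0 by (auto intro!: tendsto_eq_intros)
        show "eventually (\<lambda>s. Ppoly v11 v12 v21 v22 d (t * x s, t * s, t) = 0 \<and> (t * x s, t * s, t) \<noteq> 0 \<and> (t * x s, t * s, t) \<notin> coord_pts) (at 0)"
          using eventually_conj[OF ev ev_ne0] by (rule eventually_mono) (use t in \<open>auto simp: P2 nc23 zero_prod_def\<close>)
      qed
    qed
  qed
qed


definition Zset :: "complex \<Rightarrow> complex \<Rightarrow> complex \<Rightarrow> complex \<Rightarrow> complex \<Rightarrow> c5 set" where
  "Zset v11 v12 v21 v22 d = {z.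
     fst z * fst (snd (snd (snd z))) - fst (snd z) * fst (snd (snd z)) = 0 \<and>
     (snd (snd (snd (snd z))))^2 + fst z * fst (snd (snd (snd z))) = 0 \<and>
     2 * (v22 * (fst (snd (snd (snd z))) - fst z) - v12 * (fst (snd (snd z)) - fst (snd z))) * snd (snd (snd (snd z)))
      + a1 v11 v21 d * fst z * fst (snd z) + a2 v11 v21 d * fst z * fst (snd (snd z))
      + a3 v11 v21 d * fst (snd z) * fst (snd (snd (snd z))) + a4 v11 v21 d * fst (snd (snd z)) * fst (snd (snd (snd z))) = 0}"

lemma closed_Zset: "closed (Zset v11 v12 v21 v22 d)"
  unfolding Zset_def
  by (intro closed_Collect_conj closed_Collect_eq continuous_intros)

lemma Zset_HCF: "z \<in> Zset v11 v12 v21 v22 d \<Longrightarrow> z \<noteq> 0 \<Longrightarrow> z \<in> HCF v11 v12 v21 v22 d"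
  by (cases z) (auto simp: Zset_def HCF_def Ycone_def)


lemma beta_H: "u \<in> Vcone v11 v12 v21 v22 d \<Longrightarrow> beta u \<in> Zset v11 v12 v21 v22 d"
proof -
  assume u: "u \<in> Vcone v11 v12 v21 v22 d"
  obtain u0 u1 u2 where uu: "u = (u0,u1,u2)" by (cases u)
  have P: "Ppoly v11 v12 v21 v22 d (u0,u1,u2) = 0" using u uu by (simp add: Vcone_def)
  have H: "2 * (v22 * (u0 * u2^2 - - (u0 * u1^2)) - v12 * (u1 * u2^2 - - (u0^2 * u1))) * (u0 * u1 * u2)
      + a1 v11 v21 d * - (u0 * u1^2) * - (u0^2 * u1) + a2 v11 v21 d * - (u0 * u1^2) * (u1 * u2^2)
      + a3 v11 v21 d * - (u0^2 * u1) * (u0 * u2^2) + a4 v11 v21 d * (u1 * u2^2) * (u0 * u2^2)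
      = u0 * u1 * Ppoly v11 v12 v21 v22 d (u0,u1,u2)"
    unfolding Ppoly_def by (simp add: algebra_simps eval_nat_numeral)
  show ?thesis
    unfolding uu Zset_def beta_def using H P by (simp add: algebra_simps eval_nat_numeral)
qed

lemma beta_ne0: "u \<noteq> 0 \<Longrightarrow> u \<notin> coord_pts \<Longrightarrow> beta u \<noteq> 0"
  by (cases u) (auto simp: beta_def zero_prod_def coord_pts_def)

theorem lemma6p3:
  fixes v11 v12 v21 v22 d :: complex
  assumes "(v11, v12, v21, v22, d) \<noteq> 0"
  shows "pcl (beta ` Ucone v11 v12 v21 v22 d) \<subseteq> HCF v11 v12 v21 v22 d
         \<and> beta ` Ucone v11 v12 v21 v22 d \<subseteq> HCF v11 v12 v21 v22 d
         \<and> Vcone v11 v12 v21 v22 d \<subseteq> closure (Ucone v11 v12 v21 v22 d)"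
proof (intro conjI)
  have sub: "beta ` Ucone v11 v12 v21 v22 d \<subseteq> Zset v11 v12 v21 v22 d"
    using beta_H by (auto simp: Ucone_def)
  show "beta ` Ucone v11 v12 v21 v22 d \<subseteq> HCF v11 v12 v21 v22 d"
  proof
    fix z assume "z \<in> beta ` Ucone v11 v12 v21 v22 d"
    then obtain u where u: "u \<in> Ucone v11 v12 v21 v22 d" "z = beta u" by blast
    have "z \<noteq> 0" using u beta_ne0 by (auto simp: Ucone_def Vcone_def)
    then show "z \<in> HCF v11 v12 v21 v22 d" using sub u Zset_HCF by blast
  qed
  have "closure (beta ` Ucone v11 v12 v21 v22 d) \<subseteq> Zset v11 v12 v21 v22 d"
    using sub closed_Zset by (rule closure_minimal)
  then show "pcl (beta ` Ucone v11 v12 v21 v22 d) \<subseteq> HCF v11 v12 v21 v22 d"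
    unfolding pcl_def using Zset_HCF by blast
  show "Vcone v11 v12 v21 v22 d \<subseteq> closure (Ucone v11 v12 v21 v22 d)"
  proof
    fix u assume u: "u \<in> Vcone v11 v12 v21 v22 d"
    show "u \<in> closure (Ucone v11 v12 v21 v22 d)"
    proof (cases "u \<in> coord_pts")
      case False
      then show ?thesis using u closure_subset[of "Ucone v11 v12 v21 v22 d"] unfolding Ucone_def by blast
    next
      case True
      then obtain t where t: "t \<noteq> 0" "u = (t,0,0) \<or> u = (0,t,0) \<or> u = (0,0,t)"
        by (auto simp: coord_pts_def)
      show ?thesis
      proof (cases "u = (0,0,t)")
        case True
        then have "t^4 * a4 v11 v21 d = 0" using u by (auto simp: Vcone_def Ppoly_def)
        then have "a4 v11 v21 d = 0" using t by simp
        then show ?thesis using near_e3 t True by blast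
      next
        case False
        then show ?thesis using t near_e1 near_e2 by blast
      qed
    qed
  qed
qed

end
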